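(* Every finite chordal trigraph admits a tree representation.
   Context: A trigraph is a triple $H'=(V,E_B,E_R)$ where $E_B,E_R$ are disjoint subsets of $\binom V2$, called black and red edges. For $u\ne v\in V$, the adjacency type of $uv$ is `black' if $uv\in E_B$, `red' if $uv\in E_R$, and `non-edge' otherwise. The total graph of $H'$ is $\mathcal T(H')=(V,E_B\cup E_R)$; $H'$ is chordal if its total graph has no induced cycle of length at least $4$. In a rooted tree, a node is its own ancestor and descendant; $\mathrm{ancestors}(v)$, $\mathrm{desc}(v)$, $\mathrm{parent}(v)$ have the usual meaning, and siblings are distinct nodes with the same parent. A tree representation of a chordal trigraph $H'$ with $H:=\mathcal T(H')$ is a rooted tree $T$ with $V(T)=V(H)$ (not necessarily a subgraph of $H$) such that: (1) for every $v\in V(H)$, $N_H(v)\cap \mathrm{ancestors}(v)$ is a clique in $H$; (2) for every non-root $v$, $N_H(v)\subseteq \mathrm{desc}(v)\cup(\mathrm{ancestors}(v)\cap N_H[\mathrm{parent}(v)])$; (3) if $u$ and $v$ are siblings in $T$, then $u$ and $v$ have a common ancestor $x$ such that $ux$ and $vx$ have distinct adjacency types in $H'$. *)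

theory Defs
  imports Main
begin

definition trigraph :: "'a set \<Rightarrow> 'a set set \<Rightarrow> 'a set set \<Rightarrow> bool" where
  "trigraph V EB ER \<longleftrightarrow>
     EB \<subseteq> {e. \<exists>u v. e = {u, v} \<and> u \<noteq> v \<and> u \<in> V \<and> v \<in> V} \<and>
     ER \<subseteq> {e. \<exists>u v. e = {u, v} \<and> u \<noteq> v \<and> u \<in> V \<and> v \<in> V} \<and>
     EB \<inter> ER = {}"

datatype adj_type = Black | Red | NonEdge

definition adjtype :: "'a set set \<Rightarrow> 'a set set \<Rightarrow> 'a \<Rightarrow> 'a \<Rightarrow> adj_type" where
  "adjtype EB ER u v =
     (if {u, v} \<in> EB then Black else if {u, v} \<in> ER then Red else NonEdge)"

definition tadj :: "'a set set \<Rightarrow> 'a set set \<Rightarrow> 'a \<Rightarrow> 'a \<Rightarrow> bool" where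
  "tadj EB ER u v \<longleftrightarrow> u \<noteq> v \<and> {u, v} \<in> EB \<union> ER"

definition nbhd :: "'a set \<Rightarrow> 'a set set \<Rightarrow> 'a set set \<Rightarrow> 'a \<Rightarrow> 'a set" where
  "nbhd V EB ER v = {u \<in> V. tadj EB ER v u}"

definition cnbhd :: "'a set \<Rightarrow> 'a set set \<Rightarrow> 'a set set \<Rightarrow> 'a \<Rightarrow> 'a set" where
  "cnbhd V EB ER v = insert v (nbhd V EB ER v)"

definition is_clique :: "'a set set \<Rightarrow> 'a set set \<Rightarrow> 'a set \<Rightarrow> bool" where
  "is_clique EB ER S \<longleftrightarrow> (\<forall>x\<in>S. \<forall>y\<in>S. x \<noteq> y \<longrightarrow> tadj EB ER x y)"

definition induced_cycle :: "'a set \<Rightarrow> 'a set set \<Rightarrow> 'a set set \<Rightarrow> 'a list \<Rightarrow> bool" where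
  "induced_cycle V EB ER cs \<longleftrightarrow>
     (let k = length cs in
       k \<ge> 4 \<and> distinct cs \<and> set cs \<subseteq> V \<and>
       (\<forall>i<k. tadj EB ER (cs ! i) (cs ! ((i + 1) mod k))) \<and>
       (\<forall>i<k. \<forall>j<k. i \<noteq> j \<and> j \<noteq> (i + 1) mod k \<and> i \<noteq> (j + 1) mod k
            \<longrightarrow> \<not> tadj EB ER (cs ! i) (cs ! j)))"

definition chordal_trigraph :: "'a set \<Rightarrow> 'a set set \<Rightarrow> 'a set set \<Rightarrow> bool" where
  "chordal_trigraph V EB ER \<longleftrightarrow> \<not> (\<exists>cs. induced_cycle V EB ER cs)"

text \<open>A rooted tree on vertex set V is encoded by a root r and a parent map par;
  by convention par r = r, and every vertex reaches r by iterating par.\<close>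
definition rooted_tree :: "'a set \<Rightarrow> 'a \<Rightarrow> ('a \<Rightarrow> 'a) \<Rightarrow> bool" where
  "rooted_tree V r par \<longleftrightarrow>
     r \<in> V \<and> par r = r \<and> (\<forall>v\<in>V. par v \<in> V) \<and>
     (\<forall>v\<in>V. \<exists>k. (par ^^ k) v = r)"

text \<open>Ancestors include the node itself.\<close>
definition ancestors :: "('a \<Rightarrow> 'a) \<Rightarrow> 'a \<Rightarrow> 'a set" where
  "ancestors par v = {u. \<exists>k. (par ^^ k) v = u}"

definition descendants :: "'a set \<Rightarrow> ('a \<Rightarrow> 'a) \<Rightarrow> 'a \<Rightarrow> 'a set" where
  "descendants V par v = {u \<in> V. v \<in> ancestors par u}"

definition siblings :: "'a \<Rightarrow> ('a \<Rightarrow> 'a) \<Rightarrow> 'a \<Rightarrow> 'a \<Rightarrow> bool" where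
  "siblings r par u v \<longleftrightarrow> u \<noteq> v \<and> u \<noteq> r \<and> v \<noteq> r \<and> par u = par v"

definition tree_representation ::
  "'a set \<Rightarrow> 'a set set \<Rightarrow> 'a set set \<Rightarrow> 'a \<Rightarrow> ('a \<Rightarrow> 'a) \<Rightarrow> bool" where
  "tree_representation V EB ER r par \<longleftrightarrow>
     rooted_tree V r par \<and>
     (\<forall>v\<in>V. is_clique EB ER (nbhd V EB ER v \<inter> ancestors par v)) \<and>
     (\<forall>v\<in>V. v \<noteq> r \<longrightarrow>
        nbhd V EB ER v \<subseteq> descendants V par v \<union>
                          (ancestors par v \<inter> cnbhd V EB ER (par v))) \<and>
     (\<forall>u\<in>V. \<forall>v\<in>V. siblings r par u v \<longrightarrow>
        (\<exists>x \<in> ancestors par u \<inter> ancestors par v.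
           adjtype EB ER u x \<noteq> adjtype EB ER v x))"

end

theory Submission
  imports Defs
begin

lemma finite_argmax:
  assumes "finite Q" "Q \<noteq> {}"
  shows "\<exists>x\<in>Q. \<forall>y\<in>Q. (f y::nat) \<le> f x"
proof -
  have "Max (f ` Q) \<in> f ` Q" using assms by simp
  then obtain x where "x \<in> Q" "f x = Max (f ` Q)" by auto
  moreover have "\<forall>y\<in>Q. f y \<le> Max (f ` Q)" using assms by simp
  ultimately show ?thesis by metis
qed

lemma tadj_sym: "tadj EB ER u v = tadj EB ER v u"
  unfolding tadj_def by (auto simp: insert_commute)

lemma funpow_fix: "f r = r \<Longrightarrow> (f ^^ k) r = r"
  by (induction k) auto

lemma funpow_in: "\<forall>v\<in>V. par v \<in> V \<Longrightarrow> v \<in> V \<Longrightarrow> (par ^^ k) v \<in> V"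
  by (induction k) auto

lemma anc_self: "v \<in> ancestors par v"
  unfolding ancestors_def by (metis (mono_tags) funpow_0 mem_Collect_eq)

lemma anc_trans: "u \<in> ancestors par v \<Longrightarrow> w \<in> ancestors par u \<Longrightarrow> w \<in> ancestors par v"
  unfolding ancestors_def by (auto simp: funpow_add[symmetric]) (metis comp_apply funpow_add)

lemma anc_subset: assumes "\<forall>v\<in>V. par v \<in> V" "v \<in> V" shows "ancestors par v \<subseteq> V"
proof
  fix u assume "u \<in> ancestors par v"
  then obtain k where "u = (par ^^ k) v" unfolding ancestors_def by auto
  then show "u \<in> V" using funpow_in[of V par v k] assms by simp
qed

lemma anc_step: "ancestors par v = insert v (ancestors par (par v))"
  unfolding ancestors_def
proof (auto)
  fix k assume "(par ^^ k) v \<noteq> v"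
  then obtain j where "k = Suc j" by (cases k) auto
  then show "\<exists>j. (par ^^ j) (par v) = (par ^^ k) v" by (metis funpow_Suc_right o_apply)
next
  fix k show "\<exists>j. (par ^^ j) v = (par ^^ k) (par v)"
    by (metis funpow_Suc_right o_apply)
qed (metis funpow_0)

lemma anc_par: "par v \<in> ancestors par v"
  using anc_step anc_self by fast

lemma anc_root: "rooted_tree V r par \<Longrightarrow> v \<in> V \<Longrightarrow> r \<in> ancestors par v"
  unfolding rooted_tree_def ancestors_def by auto

lemma anc_antisym:
  assumes rt: "rooted_tree V r par" and v: "v \<in> V"
    and uv: "u \<in> ancestors par v" and vu: "v \<in> ancestors par u"
  shows "u = v"
proof -
  obtain a where a: "u = (par ^^ a) v" using uv unfolding ancestors_def by auto
  obtain b where b: "v = (par ^^ b) u" using vu unfolding ancestors_def by auto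
  have cyc: "(par ^^ (b + a)) v = v" using a b by (simp add: funpow_add)
  show ?thesis
  proof (cases "b + a = 0")
    case True then show ?thesis using a by simp
  next
    case False
    have m: "(par ^^ ((b + a) * m)) v = v" for m
    proof (induction m)
      case 0 then show ?case by simp
    next
      case (Suc m)
      have "(par ^^ ((b + a) * Suc m)) v = (par ^^ (b + a)) ((par ^^ ((b + a) * m)) v)"
        by (simp only: mult_Suc_right funpow_add o_apply)
      then show ?case using Suc cyc by simp
    qed
    obtain k where k: "(par ^^ k) v = r" using rt v unfolding rooted_tree_def by auto
    have pr: "par r = r" using rt unfolding rooted_tree_def by auto
    have "k \<le> (b + a) * k" using False by (simp add: Suc_le_eq)
    then have "(b + a) * k = ((b + a) * k - k) + k" by simp
    then have "(par ^^ ((b + a) * k)) v = (par ^^ ((b + a) * k - k)) ((par ^^ k) v)"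
      by (metis funpow_add o_apply)
    also have "\<dots> = r" using k funpow_fix[of par r] pr by simp
    finally have "v = r" using m by simp
    then show ?thesis using a funpow_fix[of par r] pr by metis
  qed
qed

lemma child_not_anc:
  assumes rt: "rooted_tree V r par" and c: "c \<in> V" "c \<noteq> r"
  shows "c \<notin> ancestors par (par c)"
proof
  assume h: "c \<in> ancestors par (par c)"
  have "par c = c" using anc_antisym[OF rt c(1) anc_par h] by simp
  then have "\<forall>k. (par ^^ k) c = c" using funpow_fix by metis
  then show False using rt c unfolding rooted_tree_def by metis
qed

lemma card_anc_child:
  assumes rt: "rooted_tree V r par" and fin: "finite V" and c: "c \<in> V" "c \<noteq> r"
  shows "card (ancestors par c) = Suc (card (ancestors par (par c)))"
proof -
  have pv: "\<forall>v\<in>V. par v \<in> V" using rt unfolding rooted_tree_def by auto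
  have "finite (ancestors par (par c))"
    using anc_subset[OF pv] pv c fin finite_subset by metis
  then show ?thesis using anc_step[of par c] child_not_anc[OF rt c] by simp
qed

lemma funpow_upd:
  assumes "\<forall>v\<in>V. par v \<in> V" "v \<in> V" "s \<notin> V"
  shows "((par(s := p)) ^^ k) v = (par ^^ k) v"
proof (induction k)
  case 0 then show ?case by simp
next
  case (Suc k)
  have "(par ^^ k) v \<in> V" using funpow_in assms by metis
  then have "(par ^^ k) v \<noteq> s" using assms by auto
  then show ?case using Suc by simp
qed

lemma anc_upd:
  assumes "\<forall>v\<in>V. par v \<in> V" "v \<in> V" "s \<notin> V"
  shows "ancestors (par(s := p)) v = ancestors par v"
  unfolding ancestors_def using funpow_upd[OF assms] by simp

lemma clique_mono: "is_clique EB ER A \<Longrightarrow> B \<subseteq> A \<Longrightarrow> is_clique EB ER B"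
  unfolding is_clique_def by blast

lemma insert_vertex:
  assumes tr: "tree_representation V EB ER r par" and fin: "finite V" and s: "s \<notin> V"
    and cl: "is_clique EB ER (nbhd (insert s V) EB ER s)"
  shows "\<exists>par'. tree_representation (insert s V) EB ER r par'"
proof -
  have rt: "rooted_tree V r par" and c1: "\<forall>v\<in>V. is_clique EB ER (nbhd V EB ER v \<inter> ancestors par v)"
    and c2: "\<forall>v\<in>V. v \<noteq> r \<longrightarrow>
        nbhd V EB ER v \<subseteq> descendants V par v \<union> (ancestors par v \<inter> cnbhd V EB ER (par v))"
    and c3: "\<forall>u\<in>V. \<forall>v\<in>V. siblings r par u v \<longrightarrow>
        (\<exists>x \<in> ancestors par u \<inter> ancestors par v. adjtype EB ER u x \<noteq> adjtype EB ER v x)"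
    using tr unfolding tree_representation_def by auto
  have pv: "\<forall>v\<in>V. par v \<in> V" and rV: "r \<in> V" and pr: "par r = r"
    using rt unfolding rooted_tree_def by auto
  define W where "W = insert s V"
  define K where "K = nbhd W EB ER s"
  have KV: "K \<subseteq> V" unfolding K_def W_def nbhd_def tadj_def by auto
  have finK: "finite K" using KV fin finite_subset by metis
  have clK: "is_clique EB ER K" using cl unfolding K_def W_def .
  have Ktadj: "x \<in> K \<Longrightarrow> tadj EB ER s x" for x unfolding K_def nbhd_def by auto
  have finA: "x \<in> V \<Longrightarrow> finite (ancestors par x)" for x
    using anc_subset[OF pv] fin finite_subset by metis
  define Q where "Q = {p \<in> V. K \<subseteq> ancestors par p \<and> K \<subseteq> cnbhd V EB ER p}"
  have "Q \<noteq> {}"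
  proof (cases "K = {}")
    case True then show ?thesis unfolding Q_def using rV by auto
  next
    case False
    obtain k where kK: "k \<in> K" and kmax: "\<forall>y\<in>K. card (ancestors par y) \<le> card (ancestors par k)"
      using finite_argmax[OF finK False, of "\<lambda>y. card (ancestors par y)"] by blast
    have kV: "k \<in> V" using kK KV by auto
    have "K \<subseteq> ancestors par k"
    proof
      fix x assume xK: "x \<in> K"
      have xV: "x \<in> V" using xK KV by auto
      show "x \<in> ancestors par k"
      proof (cases "x = k \<or> x = r")
        case True then show ?thesis using anc_self[of k par] anc_root[OF rt kV] by auto
      next
        case False
        then have "tadj EB ER x k" using clK xK kK unfolding is_clique_def by auto
        then have "k \<in> nbhd V EB ER x" unfolding nbhd_def using kV by auto
        moreover have "x \<noteq> r" using False by simp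
        ultimately have "k \<in> descendants V par x \<union> (ancestors par x \<inter> cnbhd V EB ER (par x))"
          using mp[OF bspec[OF c2 xV]] by blast
        then have "k \<in> descendants V par x \<or> k \<in> ancestors par x" by blast
        then show ?thesis
        proof
          assume "k \<in> descendants V par x" then show ?thesis unfolding descendants_def by auto
        next
          assume ka: "k \<in> ancestors par x"
          have sub: "ancestors par k \<subseteq> ancestors par x" using anc_trans[OF ka] by blast
          show ?thesis
          proof (rule ccontr)
            assume xn: "x \<notin> ancestors par k"
            have "ancestors par k \<subset> ancestors par x" using sub anc_self[of x par] xn by blast
            then have "card (ancestors par k) < card (ancestors par x)"
              by (rule psubset_card_mono[OF finA[OF xV]])
            moreover have "card (ancestors par x) \<le> card (ancestors par k)" using kmax xK by blast
            ultimately show False by linarith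
          qed
        qed
      qed
    qed
    moreover have "K \<subseteq> cnbhd V EB ER k"
    proof
      fix x assume xK: "x \<in> K"
      show "x \<in> cnbhd V EB ER k"
      proof (cases "x = k")
        case False
        then have "tadj EB ER x k" using clK xK kK unfolding is_clique_def by blast
        then have "tadj EB ER k x" using tadj_sym by metis
        then show ?thesis using xK KV unfolding cnbhd_def nbhd_def by auto
      qed (simp add: cnbhd_def)
    qed
    ultimately have "k \<in> Q" unfolding Q_def using kV by auto
    then show ?thesis by auto
  qed
  moreover have "finite Q" using fin unfolding Q_def by auto
  ultimately obtain p where pQ: "p \<in> Q" and pmax: "\<forall>y\<in>Q. card (ancestors par y) \<le> card (ancestors par p)"
    using finite_argmax[of Q "\<lambda>y. card (ancestors par y)"] by blast
  have pV: "p \<in> V" and Kp: "K \<subseteq> ancestors par p" and Kn: "K \<subseteq> cnbhd V EB ER p"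
    using pQ unfolding Q_def by auto
  have nocon: "\<exists>x\<in>ancestors par p. adjtype EB ER c x \<noteq> adjtype EB ER s x"
    if cV: "c \<in> V" and cr: "c \<noteq> r" and cp: "par c = p" for c
  proof (rule ccontr)
    assume "\<not> ?thesis"
    then have same: "\<forall>x\<in>ancestors par p. adjtype EB ER c x = adjtype EB ER s x" by auto
    have cnot: "c \<notin> ancestors par p" using child_not_anc[OF rt cV cr] cp by simp
    have pc: "p \<in> ancestors par c" using anc_par[of par c] cp by simp
    have "K \<subseteq> ancestors par c" using Kp anc_trans[OF pc] by blast
    moreover have "K \<subseteq> cnbhd V EB ER c"
    proof
      fix x assume xK: "x \<in> K"
      have xa: "x \<in> ancestors par p" using xK Kp by auto
      have "{s, x} \<in> EB \<union> ER" using Ktadj[OF xK] unfolding tadj_def by auto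
      then have "adjtype EB ER s x \<noteq> NonEdge" unfolding adjtype_def by auto
      then have "adjtype EB ER c x \<noteq> NonEdge" using same xa by auto
      then have "{c, x} \<in> EB \<union> ER" unfolding adjtype_def by (auto split: if_splits)
      moreover have "c \<noteq> x" using cnot xa by auto
      ultimately show "x \<in> cnbhd V EB ER c" using xK KV unfolding cnbhd_def nbhd_def tadj_def by auto
    qed
    ultimately have "c \<in> Q" unfolding Q_def using cV by auto
    moreover have "card (ancestors par c) = Suc (card (ancestors par p))"
      using card_anc_child[OF rt fin cV cr] cp by simp
    moreover have "card (ancestors par c) \<le> card (ancestors par p)" using pmax \<open>c \<in> Q\<close> by blast
    ultimately show False by linarith
  qed
  define par' where "par' = par(s := p)"
  have A1: "\<And>v. v \<in> V \<Longrightarrow> ancestors par' v = ancestors par v"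
    unfolding par'_def by (rule anc_upd[OF pv _ s])
  have A2: "ancestors par' s = insert s (ancestors par p)"
  proof -
    have "par' s = p" unfolding par'_def by simp
    then show ?thesis using anc_step[of par' s] A1[OF pV] by simp
  qed
  have par'V: "\<And>v. v \<in> V \<Longrightarrow> par' v = par v" unfolding par'_def using s by auto
  have rt': "rooted_tree W r par'"
  proof -
    have "r \<in> ancestors par' v" if "v \<in> W" for v
      using that A1 A2 anc_root[OF rt] pV unfolding W_def by auto
    then have "\<forall>v\<in>W. \<exists>k. (par' ^^ k) v = r" unfolding ancestors_def by auto
    moreover have "\<forall>v\<in>W. par' v \<in> W" using pv pV unfolding W_def par'_def by auto
    ultimately show ?thesis unfolding rooted_tree_def W_def using rV pr par'V by auto
  qed
  have c1': "\<forall>v\<in>W. is_clique EB ER (nbhd W EB ER v \<inter> ancestors par' v)"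
  proof
    fix v assume "v \<in> W"
    then have "v = s \<or> v \<in> V" unfolding W_def by auto
    then show "is_clique EB ER (nbhd W EB ER v \<inter> ancestors par' v)"
    proof
      assume "v = s" then show ?thesis using clK clique_mono unfolding K_def by blast
    next
      assume vV: "v \<in> V"
      have "nbhd W EB ER v \<inter> ancestors par' v \<subseteq> nbhd V EB ER v \<inter> ancestors par v"
        using A1[OF vV] anc_subset[OF pv vV] unfolding nbhd_def by auto
      then show ?thesis using c1 vV clique_mono by blast
    qed
  qed
  have c2': "\<forall>v\<in>W. v \<noteq> r \<longrightarrow>
        nbhd W EB ER v \<subseteq> descendants W par' v \<union> (ancestors par' v \<inter> cnbhd W EB ER (par' v))"
  proof (intro ballI impI)
    fix v assume "v \<in> W" and vr: "v \<noteq> r"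
    then have "v = s \<or> v \<in> V" unfolding W_def by auto
    then show "nbhd W EB ER v \<subseteq> descendants W par' v \<union> (ancestors par' v \<inter> cnbhd W EB ER (par' v))"
    proof
      assume vs: "v = s"
      have "par' s = p" unfolding par'_def by simp
      moreover have "cnbhd V EB ER p \<subseteq> cnbhd W EB ER p" unfolding cnbhd_def nbhd_def W_def by auto
      ultimately show ?thesis using vs Kp Kn A2 unfolding K_def by auto
    next
      assume vV: "v \<in> V"
      show ?thesis
      proof
        fix u assume u: "u \<in> nbhd W EB ER v"
        show "u \<in> descendants W par' v \<union> (ancestors par' v \<inter> cnbhd W EB ER (par' v))"
        proof (cases "u = s")
          case True
          then have "v \<in> K" using u vV unfolding K_def nbhd_def W_def by (auto simp: tadj_sym)
          then have "v \<in> ancestors par' s" using Kp A2 by auto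
          then show ?thesis using True unfolding descendants_def W_def by auto
        next
          case False
          then have uV: "u \<in> nbhd V EB ER v" using u unfolding nbhd_def W_def by auto
          then have uVV: "u \<in> V" unfolding nbhd_def by auto
          have "u \<in> descendants V par v \<union> (ancestors par v \<inter> cnbhd V EB ER (par v))"
            using c2 vV vr uV by blast
          moreover have "descendants V par v \<subseteq> descendants W par' v"
            using A1 unfolding descendants_def W_def by auto
          moreover have "cnbhd V EB ER (par v) \<subseteq> cnbhd W EB ER (par' v)"
            using par'V[OF vV] unfolding cnbhd_def nbhd_def W_def by auto
          ultimately show ?thesis using A1[OF vV] by blast
        qed
      qed
    qed
  qed
  have c3': "\<forall>u\<in>W. \<forall>v\<in>W. siblings r par' u v \<longrightarrow>
        (\<exists>x \<in> ancestors par' u \<inter> ancestors par' v. adjtype EB ER u x \<noteq> adjtype EB ER v x)"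
  proof (intro ballI impI)
    fix u v assume uW: "u \<in> W" and vW: "v \<in> W" and sib: "siblings r par' u v"
    have key: "\<exists>x \<in> ancestors par' s \<inter> ancestors par' c. adjtype EB ER s x \<noteq> adjtype EB ER c x"
      if cV: "c \<in> V" and cr: "c \<noteq> r" and cp: "par c = p" for c
    proof -
      obtain x where xa: "x \<in> ancestors par p" and xd: "adjtype EB ER c x \<noteq> adjtype EB ER s x"
        using nocon[OF cV cr cp] by auto
      have pc: "p \<in> ancestors par c" using anc_par[of par c] cp by simp
      have "x \<in> ancestors par c" using anc_trans[OF pc xa] .
      then show ?thesis using xa xd A1[OF cV] A2 by (intro bexI[of _ x]) auto
    qed
    show "\<exists>x \<in> ancestors par' u \<inter> ancestors par' v. adjtype EB ER u x \<noteq> adjtype EB ER v x"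
    proof (cases "u = s")
      case True
      then have vV: "v \<in> V" using vW sib unfolding W_def siblings_def by auto
      have "par v = p" using sib True par'V[OF vV] unfolding siblings_def par'_def by auto
      then show ?thesis using key[OF vV] sib True unfolding siblings_def by auto
    next
      case uns: False
      then have uV: "u \<in> V" using uW unfolding W_def by auto
      show ?thesis
      proof (cases "v = s")
        case True
        have "par u = p" using sib True par'V[OF uV] unfolding siblings_def par'_def by auto
        then obtain x where "x \<in> ancestors par' s \<inter> ancestors par' u" "adjtype EB ER s x \<noteq> adjtype EB ER u x"
          using key[OF uV] sib unfolding siblings_def by auto
        then show ?thesis using True by (intro bexI[of _ x]) auto
      next
        case False
        then have vV: "v \<in> V" using vW unfolding W_def by auto
        have "siblings r par u v" using sib par'V[OF uV] par'V[OF vV] unfolding siblings_def by auto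
        then show ?thesis using c3 uV vV A1[OF uV] A1[OF vV] by auto
      qed
    qed
  qed
  have "tree_representation W EB ER r par'"
    unfolding tree_representation_def using rt' c1' c2' c3' by blast
  then show ?thesis unfolding W_def by blast
qed



lemma succ_splice:
  assumes s: "successively P ys" and ij: "i < j" "j < length ys"
    and junc: "0 < i \<Longrightarrow> P (ys ! (i - 1)) (ys ! j)"
  shows "successively P (take i ys @ drop j ys)"
proof -
  have s1: "successively P (take i ys)"
    using s unfolding successively_conv_nth by auto
  have s2: "successively P (drop j ys)"
    using s unfolding successively_conv_nth by auto
  show ?thesis
  proof (cases "i = 0")
    case True then show ?thesis using s2 by simp
  next
    case False
    have "last (take i ys) = ys ! (i - 1)" using False ij by (subst last_conv_nth) auto
    moreover have "hd (drop j ys) = ys ! j" using ij by (simp add: hd_drop_conv_nth)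
    ultimately show ?thesis using s1 s2 junc False successively_append_iff by fastforce
  qed
qed

lemma walk_shortcut:
  assumes "successively (tadj EB ER) xs" "xs \<noteq> []" "hd xs = x" "last xs = y" "set xs \<subseteq> A"
  shows "\<exists>ys. successively (tadj EB ER) ys \<and> ys \<noteq> [] \<and> hd ys = x \<and> last ys = y \<and> set ys \<subseteq> A \<and>
     (\<forall>i j. i < j \<longrightarrow> j < length ys \<longrightarrow> ys ! i \<noteq> ys ! j \<and> (Suc i < j \<longrightarrow> \<not> tadj EB ER (ys ! i) (ys ! j)))"
proof -
  define P where "P ys \<longleftrightarrow> successively (tadj EB ER) ys \<and> ys \<noteq> [] \<and> hd ys = x \<and> last ys = y \<and> set ys \<subseteq> A" for ys
  have "P xs" using assms unfolding P_def by auto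
  then obtain ys where Pys: "P ys" and mn: "\<forall>zs. P zs \<longrightarrow> length ys \<le> length zs"
    using ex_has_least_nat[of P xs length] by blast
  have sy: "successively (tadj EB ER) ys" and ne: "ys \<noteq> []" and hy: "hd ys = x" and ly: "last ys = y"
    and sety: "set ys \<subseteq> A" using Pys unfolding P_def by auto
  have splice: "P (take i ys @ drop j ys)"
    if ij: "i < j" "j < length ys" and junc: "0 < i \<Longrightarrow> tadj EB ER (ys ! (i - 1)) (ys ! j)"
      and h0: "i = 0 \<Longrightarrow> ys ! j = ys ! 0" for i j
  proof -
    have "successively (tadj EB ER) (take i ys @ drop j ys)" using succ_splice[OF sy ij junc] by simp
    moreover have "drop j ys \<noteq> []" using ij by simp
    moreover have "hd (take i ys @ drop j ys) = x"
    proof (cases "i = 0")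
      case True then show ?thesis using h0 ij hy ne by (simp add: hd_drop_conv_nth hd_conv_nth)
    next
      case False then show ?thesis using ij hy ne by simp
    qed
    moreover have "last (take i ys @ drop j ys) = y" using ij ly by simp
    moreover have "set (take i ys @ drop j ys) \<subseteq> A"
      using sety set_take_subset set_drop_subset by fastforce
    ultimately show ?thesis unfolding P_def by simp
  qed
  have "ys ! i \<noteq> ys ! j \<and> (Suc i < j \<longrightarrow> \<not> tadj EB ER (ys ! i) (ys ! j))"
    if ij: "i < j" "j < length ys" for i j
  proof (intro conjI impI)
    show "ys ! i \<noteq> ys ! j"
    proof
      assume eq: "ys ! i = ys ! j"
      have "P (take i ys @ drop j ys)"
      proof (rule splice[OF ij])
        assume "0 < i"
        then have "tadj EB ER (ys ! (i - 1)) (ys ! (Suc (i - 1)))"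
          using successively_nth[OF sy, of "i - 1"] ij by simp
        then show "tadj EB ER (ys ! (i - 1)) (ys ! j)" using eq \<open>0 < i\<close> by simp
      next
        assume "i = 0" then show "ys ! j = ys ! 0" using eq by simp
      qed
      moreover have "length (take i ys @ drop j ys) < length ys" using ij by simp
      ultimately show False using mn by fastforce
    qed
  next
    assume si: "Suc i < j"
    show "\<not> tadj EB ER (ys ! i) (ys ! j)"
    proof
      assume t: "tadj EB ER (ys ! i) (ys ! j)"
      have "P (take (Suc i) ys @ drop j ys)"
        by (rule splice) (use si ij t in auto)
      moreover have "length (take (Suc i) ys @ drop j ys) < length ys" using ij si by simp
      ultimately show False using mn by fastforce
    qed
  qed
  then show ?thesis using Pys unfolding P_def by blast
qed

lemma cycle_close:
  assumes succ: "successively (tadj EB ER) xs" and len: "length xs \<ge> 3"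
    and ind: "\<forall>i j. i < j \<longrightarrow> j < length xs \<longrightarrow> xs ! i \<noteq> xs ! j \<and> (Suc i < j \<longrightarrow> \<not> tadj EB ER (xs ! i) (xs ! j))"
    and vn: "v \<notin> set xs" and vl: "tadj EB ER (last xs) v" and vh: "tadj EB ER v (hd xs)"
    and nv: "\<forall>i. 0 < i \<longrightarrow> i < length xs - 1 \<longrightarrow> \<not> tadj EB ER v (xs ! i)"
    and sub: "set xs \<subseteq> V" "v \<in> V"
  shows "induced_cycle V EB ER (xs @ [v])"
proof -
  define n where "n = length xs"
  define cs where "cs = xs @ [v]"
  have lcs: "length cs = Suc n" unfolding cs_def n_def by simp
  have csl: "i < n \<Longrightarrow> cs ! i = xs ! i" for i unfolding cs_def n_def by (simp add: nth_append)
  have csn: "cs ! n = v" unfolding cs_def n_def by simp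
  have ne: "xs \<noteq> []" using len by auto
  have lastx: "last xs = xs ! (n - 1)" unfolding n_def using ne by (simp add: last_conv_nth)
  have hdx: "hd xs = xs ! 0" using ne by (simp add: hd_conv_nth)
  have dxs: "distinct xs" unfolding distinct_conv_nth
    using ind by (metis linorder_neqE_nat)
  have modk: "(i + 1) mod Suc n = (if i = n then 0 else i + 1)" if "i < Suc n" for i
    using that by auto
  have adj: "tadj EB ER (cs ! i) (cs ! ((i + 1) mod Suc n))" if "i < Suc n" for i
  proof -
    have "i + 1 < n \<or> i + 1 = n \<or> i = n" using that by arith
    then consider "i + 1 < n" | "i + 1 = n" | "i = n" by blast
    then show ?thesis
    proof cases
      case 1
      then show ?thesis using modk[OF that] csl successively_nth[OF succ, of i] unfolding n_def by simp
    next
      case 2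
      then have i1: "i = n - 1" by simp
      have "i < n" using 2 by simp
      then have "cs ! i = last xs" using csl lastx i1 by simp
      moreover have "(i + 1) mod Suc n = n" using 2 by simp
      ultimately show ?thesis using csn vl by simp
    next
      case 3
      have "0 < n" using ne unfolding n_def by simp
      then have "cs ! 0 = hd xs" using csl[of 0] hdx by simp
      then show ?thesis using 3 modk[OF that] csn vh by simp
    qed
  qed
  have nadj: "\<not> tadj EB ER (cs ! i) (cs ! j)"
    if ij: "i < Suc n" "j < Suc n" "i \<noteq> j" "j \<noteq> (i + 1) mod Suc n" "i \<noteq> (j + 1) mod Suc n" for i j
  proof -
    have one: "\<not> tadj EB ER (cs ! a) (cs ! b)" if ab: "a < b" "b < n" "Suc a < b" for a b
      using ind ab csl[of a] csl[of b] n_def by auto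
    have two: "\<not> tadj EB ER v (cs ! a)" if ab: "0 < a" "a < n - 1" for a
      using nv ab csl[of a] n_def by auto
    have "(i < n \<and> j < n) \<or> (i = n \<and> j < n) \<or> (i < n \<and> j = n)" using ij by arith
    then consider "i < n" "j < n" | "i = n" "j < n" | "i < n" "j = n" by blast
    then show ?thesis
    proof cases
      case 1
      then have "i + 1 \<noteq> j" "j + 1 \<noteq> i" using ij modk by auto
      then show ?thesis using one[of i j] one[of j i] 1 ij(3) tadj_sym by (metis Suc_eq_plus1 linorder_neqE_nat Suc_lessI)
    next
      case 2
      then have "j \<noteq> 0" "j + 1 \<noteq> n" using ij modk by auto
      then show ?thesis using two[of j] 2 csn by auto
    next
      case 3
      then have "i \<noteq> 0" "i + 1 \<noteq> n" using ij modk by auto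
      then show ?thesis using two[of i] 3 csn tadj_sym by (metis One_nat_def Suc_eq_plus1 add_diff_cancel_right' bot_nat_0.not_eq_extremum less_SucE less_diff_conv)
    qed
  qed
  show ?thesis
    unfolding induced_cycle_def Let_def cs_def[symmetric] lcs
  proof (intro conjI allI impI)
    show "4 \<le> Suc n" using len unfolding n_def by simp
    show "distinct cs" using dxs vn unfolding cs_def by simp
    show "set cs \<subseteq> V" using sub unfolding cs_def by simp
  qed (use adj nadj in auto)
qed

lemma chordal_subset:
  assumes "chordal_trigraph V EB ER" "V' \<subseteq> V"
  shows "chordal_trigraph V' EB ER"
  using assms unfolding chordal_trigraph_def induced_cycle_def Let_def by blast

lemma tadj_irrefl: "\<not> tadj EB ER v v"
  unfolding tadj_def by simp

lemma dirac:
  assumes "finite V" "chordal_trigraph V EB ER" "v \<in> V" "u \<in> V" "u \<noteq> v" "\<not> tadj EB ER v u"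
  shows "\<exists>w\<in>V. w \<noteq> v \<and> \<not> tadj EB ER v w \<and> is_clique EB ER (nbhd V EB ER w)"
  using assms
proof (induction "card V" arbitrary: V v u rule: less_induct)
  case less
  note fin = less.prems(1) and ch = less.prems(2) and vV = less.prems(3) and uV = less.prems(4)
    and uv = less.prems(5) and nuv = less.prems(6)
  define D where "D = {d \<in> V. d \<noteq> v \<and> \<not> tadj EB ER v d}"
  define C where "C = {c. \<exists>xs. successively (tadj EB ER) xs \<and> xs \<noteq> [] \<and> hd xs = u \<and> last xs = c \<and> set xs \<subseteq> D}"
  have uD: "u \<in> D" unfolding D_def using uV uv nuv by auto
  have uC: "u \<in> C" unfolding C_def using uD by (intro CollectI exI[of _ "[u]"]) auto
  have CD: "C \<subseteq> D" unfolding C_def by auto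
  have Cclosed: "d \<in> C" if cC: "c \<in> C" and dD: "d \<in> D" and cd: "tadj EB ER c d" for c d
  proof -
    obtain xs where xs: "successively (tadj EB ER) xs" "xs \<noteq> []" "hd xs = u" "last xs = c" "set xs \<subseteq> D"
      using cC unfolding C_def by auto
    have "successively (tadj EB ER) (xs @ [d])" using xs cd by (simp add: successively_append_iff)
    then show ?thesis unfolding C_def using xs dD by (intro CollectI exI[of _ "xs @ [d]"]) auto
  qed
  have Cwalk: "\<exists>xs. successively (tadj EB ER) xs \<and> xs \<noteq> [] \<and> hd xs = c1 \<and> last xs = c2 \<and> set xs \<subseteq> D"
    if c1C: "c1 \<in> C" and c2C: "c2 \<in> C" for c1 c2
  proof -
    obtain xs where xs: "successively (tadj EB ER) xs" "xs \<noteq> []" "hd xs = u" "last xs = c1" "set xs \<subseteq> D"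
      using c1C unfolding C_def by auto
    obtain ys where ys: "successively (tadj EB ER) ys" "ys \<noteq> []" "hd ys = u" "last ys = c2" "set ys \<subseteq> D"
      using c2C unfolding C_def by auto
    have sr: "successively (tadj EB ER) (rev xs)" using xs(1) tadj_sym[of EB ER]
      by (simp add: successively_rev)
    obtain t where yt: "ys = u # t" using ys(2) ys(3) by (cases ys) auto
    show ?thesis
    proof (cases "t = []")
      case True
      then show ?thesis using sr xs yt ys by (intro exI[of _ "rev xs"]) (auto simp: hd_rev last_rev)
    next
      case False
      have st: "successively (tadj EB ER) t" using ys(1) yt by (cases t) auto
      have j: "tadj EB ER u (hd t)" using ys(1) yt False by (cases t) auto
      have "successively (tadj EB ER) (rev xs @ t)"
        using sr st j xs False by (simp add: successively_append_iff last_rev)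
      moreover have "hd (rev xs @ t) = c1" using xs by (simp add: hd_rev)
      moreover have "last (rev xs @ t) = c2" using ys yt False by simp
      moreover have "set (rev xs @ t) \<subseteq> D" using xs ys yt by auto
      ultimately show ?thesis using False by (intro exI[of _ "rev xs @ t"]) simp
    qed
  qed
  define S where "S = {z \<in> V. z \<notin> C \<and> (\<exists>c\<in>C. tadj EB ER z c)}"
  have SN: "tadj EB ER v z" if zS: "z \<in> S" for z
  proof -
    obtain c where zV: "z \<in> V" and zC: "z \<notin> C" and cC: "c \<in> C" and zc: "tadj EB ER z c"
      using zS unfolding S_def by auto
    have "z \<notin> D" using Cclosed[OF cC _ ] zc tadj_sym zC by metis
    moreover have "z \<noteq> v" using zc cC CD unfolding D_def by auto
    ultimately show ?thesis using zV unfolding D_def by auto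
  qed
  have Sclique: "is_clique EB ER S"
    unfolding is_clique_def
  proof (intro ballI impI)
    fix x y assume xS: "x \<in> S" and yS: "y \<in> S" and xy: "x \<noteq> y"
    show "tadj EB ER x y"
    proof (rule ccontr)
      assume nxy: "\<not> tadj EB ER x y"
      obtain cx where cx: "cx \<in> C" "tadj EB ER x cx" using xS unfolding S_def by auto
      obtain cy where cy: "cy \<in> C" "tadj EB ER y cy" using yS unfolding S_def by auto
      obtain ws where ws: "successively (tadj EB ER) ws" "ws \<noteq> []" "hd ws = cx" "last ws = cy" "set ws \<subseteq> D"
        using Cwalk[OF cx(1) cy(1)] by auto
      have xV: "x \<in> V" and yV: "y \<in> V" using xS yS unfolding S_def by auto
      define A where "A = insert x (insert y D)"
      have "tadj EB ER cy y" using cy(2) tadj_sym by metis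
      then have s1: "successively (tadj EB ER) (ws @ [y])"
        using ws by (simp add: successively_append_iff)
      have "hd (ws @ [y]) = cx" using ws by simp
      then have "successively (tadj EB ER) (x # (ws @ [y]))"
        using s1 cx(2) by (cases "ws @ [y]") auto
      moreover have "set (x # ws @ [y]) \<subseteq> A" using ws unfolding A_def by auto
      ultimately obtain ys where ys: "successively (tadj EB ER) ys" "ys \<noteq> []" "hd ys = x" "last ys = y" "set ys \<subseteq> A"
        and ind: "\<forall>i j. i < j \<longrightarrow> j < length ys \<longrightarrow> ys ! i \<noteq> ys ! j \<and> (Suc i < j \<longrightarrow> \<not> tadj EB ER (ys ! i) (ys ! j))"
        using walk_shortcut[of EB ER "x # ws @ [y]" x y A] by auto
      have h0: "ys ! 0 = x" using ys by (simp add: hd_conv_nth)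
      have hl: "ys ! (length ys - 1) = y" using ys by (simp add: last_conv_nth)
      have len: "length ys \<ge> 3"
      proof (rule ccontr)
        assume "\<not> length ys \<ge> 3"
        moreover have "length ys \<noteq> 1" using h0 hl xy by auto
        moreover have "length ys \<noteq> 0" using ys by auto
        ultimately have "length ys = 2" by arith
        then have "tadj EB ER (ys ! 0) (ys ! 1)" using successively_nth[OF ys(1), of 0] by simp
        then show False using h0 hl \<open>length ys = 2\<close> nxy by simp
      qed
      have vS: "v \<notin> D" unfolding D_def by auto
      have vx: "tadj EB ER v x" and vy: "tadj EB ER v y" using SN xS yS by auto
      have "v \<notin> set ys"
      proof
        assume "v \<in> set ys"
        then have "v \<in> A" using ys by auto
        then show False using vS vx vy tadj_irrefl[of EB ER v] unfolding A_def by auto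
      qed
      moreover have "\<forall>i. 0 < i \<longrightarrow> i < length ys - 1 \<longrightarrow> \<not> tadj EB ER v (ys ! i)"
      proof (intro allI impI)
        fix i assume i0: "0 < i" and il: "i < length ys - 1"
        have il2: "i < length ys" using il by simp
        then have "ys ! i \<in> set ys" by simp
        then have yA: "ys ! i \<in> A" using ys(5) by blast
        have ll: "length ys - 1 < length ys" using ys(2) by simp
        have "ys ! 0 \<noteq> ys ! i" using ind i0 il2 by blast
        moreover have "ys ! i \<noteq> ys ! (length ys - 1)" using ind il ll by blast
        ultimately have "ys ! i \<noteq> x" "ys ! i \<noteq> y" using h0 hl by auto
        then have "ys ! i \<in> D" using yA unfolding A_def by auto
        then show "\<not> tadj EB ER v (ys ! i)" unfolding D_def by auto
      qed
      moreover have "set ys \<subseteq> V" using ys xV yV unfolding A_def D_def by auto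
      ultimately have "induced_cycle V EB ER (ys @ [v])"
        using cycle_close[OF ys(1) len ind] ys vx vy vV tadj_sym[of EB ER v y] by simp
      then show False using ch unfolding chordal_trigraph_def by blast
    qed
  qed
  define V1 where "V1 = C \<union> S"
  have V1V: "V1 \<subseteq> V" unfolding V1_def S_def using CD unfolding D_def by auto
  have "v \<notin> C" using CD unfolding D_def by auto
  moreover have "v \<notin> S" using SN tadj_irrefl[of EB ER v] by blast
  ultimately have vV1: "v \<notin> V1" unfolding V1_def by blast
  have "V1 \<subset> V" using V1V vV1 vV by blast
  then have cardlt: "card V1 < card V" by (rule psubset_card_mono[OF fin])
  have ch1: "chordal_trigraph V1 EB ER" using chordal_subset[OF ch V1V] .
  have fin1: "finite V1" using finite_subset[OF V1V fin] .
  have nbeq: "nbhd V EB ER w = nbhd V1 EB ER w" if wC: "w \<in> C" for w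
  proof
    show "nbhd V EB ER w \<subseteq> nbhd V1 EB ER w"
    proof
      fix z assume "z \<in> nbhd V EB ER w"
      then have zV: "z \<in> V" and wz: "tadj EB ER w z" unfolding nbhd_def by auto
      have "tadj EB ER z w" using wz tadj_sym by metis
      then have "z \<in> C \<or> z \<in> S" using zV wC unfolding S_def by blast
      then show "z \<in> nbhd V1 EB ER w" using wz unfolding nbhd_def V1_def by auto
    qed
  next
    show "nbhd V1 EB ER w \<subseteq> nbhd V EB ER w" using V1V unfolding nbhd_def by auto
  qed
  show ?case
  proof (cases "\<forall>a\<in>V1. \<forall>b\<in>V1. a \<noteq> b \<longrightarrow> tadj EB ER a b")
    case True
    have "is_clique EB ER (nbhd V1 EB ER u)"
      using True unfolding is_clique_def nbhd_def by auto
    then show ?thesis using nbeq[OF uC] uV uv nuv by auto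
  next
    case False
    then obtain a b where aV: "a \<in> V1" and bV: "b \<in> V1" and ab: "a \<noteq> b" and nab: "\<not> tadj EB ER a b" by auto
    obtain w1 where w1: "w1 \<in> V1" "w1 \<noteq> a" "\<not> tadj EB ER a w1" "is_clique EB ER (nbhd V1 EB ER w1)"
      using less.hyps[OF cardlt fin1 ch1 aV bV ab[symmetric] nab] by auto
    obtain w2 where w2: "w2 \<in> V1" "w2 \<noteq> w1" "\<not> tadj EB ER w1 w2" "is_clique EB ER (nbhd V1 EB ER w2)"
      using less.hyps[OF cardlt fin1 ch1 w1(1) aV w1(2)[symmetric]] w1(3) tadj_sym[of EB ER a w1] by auto
    have "w1 \<in> C \<or> w2 \<in> C"
    proof (rule ccontr)
      assume "\<not> ?thesis"
      then have "w1 \<in> S" "w2 \<in> S" using w1 w2 unfolding V1_def by auto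
      then show False using Sclique w2(2,3) unfolding is_clique_def by auto
    qed
    then obtain w where wC: "w \<in> C" and wcl: "is_clique EB ER (nbhd V1 EB ER w)" using w1 w2 by auto
    have "w \<in> D" using wC CD by auto
    then show ?thesis using nbeq[OF wC] wcl unfolding D_def by auto
  qed
qed

lemma exists_simplicial:
  assumes "finite V" "V \<noteq> {}" "chordal_trigraph V EB ER"
  shows "\<exists>s\<in>V. is_clique EB ER (nbhd V EB ER s)"
proof (cases "\<exists>v\<in>V. \<exists>u\<in>V. u \<noteq> v \<and> \<not> tadj EB ER v u")
  case True
  then show ?thesis using dirac[OF assms(1,3)] by blast
next
  case False
  obtain s where "s \<in> V" using assms(2) by auto
  moreover have "is_clique EB ER (nbhd V EB ER s)"
    using False unfolding is_clique_def nbhd_def by (auto simp: tadj_sym)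
  ultimately show ?thesis by blast
qed

lemma singleton_tree: "tree_representation {s} EB ER s (\<lambda>_. s)"
proof -
  have nb: "nbhd {s} EB ER s = {}" unfolding nbhd_def tadj_def by auto
  have "ancestors (\<lambda>_. s) s = {s}" unfolding ancestors_def
    by (auto intro: exI[of _ 0]) (metis funpow_fix)
  show ?thesis unfolding tree_representation_def rooted_tree_def siblings_def
    using nb by (auto simp: is_clique_def intro: exI[of _ 0])
qed

theorem lemma3p1:
  fixes V :: "'a set" and EB ER :: "'a set set"
  assumes "finite V" and "V \<noteq> {}"
    and "trigraph V EB ER"
    and "chordal_trigraph V EB ER"
  shows "\<exists>r par. tree_representation V EB ER r par"
  using assms(1,2,4)
proof (induction "card V" arbitrary: V rule: less_induct)
  case less
  obtain s where sV: "s \<in> V" and scl: "is_clique EB ER (nbhd V EB ER s)"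
    using exists_simplicial[OF less.prems] by blast
  show ?case
  proof (cases "V = {s}")
    case True
    then show ?thesis using singleton_tree[of s EB ER] by auto
  next
    case False
    define V' where "V' = V - {s}"
    have ne: "V' \<noteq> {}" using False sV unfolding V'_def by auto
    have fin': "finite V'" using less.prems(1) unfolding V'_def by simp
    have lt: "card V' < card V" using less.prems(1) sV unfolding V'_def by (metis card_Diff1_less)
    have ch': "chordal_trigraph V' EB ER" using chordal_subset[OF less.prems(3)] unfolding V'_def by blast
    obtain r par where tr: "tree_representation V' EB ER r par" using less.hyps[OF lt fin' ne ch'] by blast
    have VV: "insert s V' = V" using sV unfolding V'_def by auto
    have "s \<notin> V'" unfolding V'_def by simp
    then show ?thesis using insert_vertex[OF tr fin'] scl VV by metis
  qed
qed

end
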